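(* In the M/M/1 setting below, let $p^S_s:=R-C\,\mathbb{E}[W(q^S_s\Lambda)]$ be the fee that induces the joining probability $q^S_s$ in the shared belief case. If $p^S_s\ge0$, then $q^S_s\le q^S_e$; moreover, if $p^S_s=0$ then $q^S_s=q^S_e$.
   Context: Setting: an M/M/1 queue with true (deterministic) Poisson arrival rate $\lambda>0$ and exponential service times with rate $\mu$, so the expected time in system at effective arrival rate $x\in[0,\mu)$ is $W(x)=1/(\mu-x)$. Each served customer receives reward $R$ and incurs waiting cost $C>0$ per unit time, with $R\ge C/\mu$. Customers' beliefs about the arrival rate are described by a non-degenerate nonnegative random variable $\Lambda$ whose support has minimum $\lambda_{\min}$ and maximum $\lambda_{\max}$, with $0\le\lambda_{\min}<\lambda<\lambda_{\max}<\mu$. The social welfare rate as a function of the joining probability $q\in[0,1]$ is $\mathrm{SW}^S(q)=q\lambda\,(R-C\,W(q\lambda))$ (strictly concave on $[0,1]$), and $q^S_s$ is its maximizer over $[0,1]$. The individual (no-fee) equilibrium $q^S_e$ is defined as follows: if $R-C\,\mathbb{E}[W(\Lambda)]\ge0$ then $q^S_e=1$; otherwise $q^S_e$ is the unique $q\in[0,1]$ with $C\,\mathbb{E}[W(q\Lambda)]=R$. *)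

theory Defs
  imports "HOL-Probability.Probability"
begin

text \<open>Expected time in an M/M/1 system with service rate mu at effective arrival rate x.\<close>
definition W :: "real \<Rightarrow> real \<Rightarrow> real" where
  "W mu x = 1 / (mu - x)"

definition SW :: "real \<Rightarrow> real \<Rightarrow> real \<Rightarrow> real \<Rightarrow> real \<Rightarrow> real" where
  "SW lam mu R C q = q * lam * (R - C * W mu (q * lam))"

text \<open>Expected sojourn time under the belief distribution D (law of Lambda) at joining probability q.\<close>
definition EW :: "real measure \<Rightarrow> real \<Rightarrow> real \<Rightarrow> real" where
  "EW D mu q = (\<integral>x. W mu (q * x) \<partial>D)"

definition q_s :: "real \<Rightarrow> real \<Rightarrow> real \<Rightarrow> real \<Rightarrow> real" where
  "q_s lam mu R C = (THE q. q \<in> {0..1} \<and> (\<forall>q'\<in>{0..1}. SW lam mu R C q' \<le> SW lam mu R C q))"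

definition q_e :: "real measure \<Rightarrow> real \<Rightarrow> real \<Rightarrow> real \<Rightarrow> real" where
  "q_e D mu R C = (if R - C * EW D mu 1 \<ge> 0 then 1
                   else (THE q. q \<in> {0..1} \<and> C * EW D mu q = R))"

end

theory Submission
  imports Defs
begin

lemma den_bound:
  fixes x q lmax mu :: real
  assumes "0 \<le> x" "x \<le> lmax" "lmax < mu" "0 \<le> q" "q \<le> 1"
  shows "mu - lmax \<le> mu - q * x" "0 < mu - q * x"
proof -
  have "q * x \<le> 1 * x" using assms by (intro mult_right_mono) auto
  then show "mu - lmax \<le> mu - q * x" "0 < mu - q * x" using assms by auto
qed

lemma W_diff:
  fixes x a b lmax mu :: real
  assumes "0 \<le> x" "x \<le> lmax" "lmax < mu" "0 \<le> a" "a \<le> b" "b \<le> 1"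
  shows "W mu (b*x) - W mu (a*x) = (b - a) * x / ((mu - b*x) * (mu - a*x))"
    "0 \<le> W mu (b*x) - W mu (a*x)"
    "W mu (b*x) - W mu (a*x) \<le> (b - a) * lmax / (mu - lmax)^2"
proof -
  have da: "mu - lmax \<le> mu - a * x" "0 < mu - a * x" using den_bound[of x lmax mu a] assms by auto
  have db: "mu - lmax \<le> mu - b * x" "0 < mu - b * x" using den_bound[of x lmax mu b] assms by auto
  show eq: "W mu (b*x) - W mu (a*x) = (b - a) * x / ((mu - b*x) * (mu - a*x))"
    using da db unfolding W_def by (simp add: field_simps)
  show "0 \<le> W mu (b*x) - W mu (a*x)" unfolding eq using da db assms by simp
  have "(b - a) * x / ((mu - b*x) * (mu - a*x)) \<le> (b - a) * lmax / ((mu - lmax) * (mu - lmax))"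
    apply (rule frac_le)
    using assms da db by (auto intro: mult_left_mono mult_mono)
  then show "W mu (b*x) - W mu (a*x) \<le> (b - a) * lmax / (mu - lmax)^2"
    unfolding eq by (simp add: power2_eq_square)
qed

lemma W_strict:
  fixes x a b lmax mu :: real
  assumes "0 < x" "x \<le> lmax" "lmax < mu" "0 \<le> a" "a < b" "b \<le> 1"
  shows "W mu (a*x) < W mu (b*x)"
proof -
  have da: "0 < mu - a * x" using den_bound[of x lmax mu a] assms by auto
  have db: "0 < mu - b * x" using den_bound[of x lmax mu b] assms by auto
  have "a * x < b * x" using assms by simp
  then show ?thesis using da db unfolding W_def by (simp add: frac_less2)
qed

lemma avg_ineq:
  fixes u v :: real
  assumes "0 < u" "0 < v" "u \<noteq> v"
  shows "2 / (u + v) < (1/u + 1/v) / 2"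
proof -
  have "0 < (u - v)^2" using assms by simp
  then have "4 * u * v < (u + v) * (u + v)" by (simp add: power2_eq_square algebra_simps)
  then show ?thesis using assms by (simp add: field_simps)
qed

lemma SW_alt:
  fixes lam mu R C q :: real
  assumes "mu - q * lam \<noteq> 0"
  shows "SW lam mu R C q = q * lam * R - C * mu * (1 / (mu - q*lam)) + C"
  using assms unfolding SW_def W_def by (simp add: field_simps)

lemma SW_strict:
  fixes lam mu R C a b lmax :: real
  assumes "0 < lam" "lam < mu" "0 < C" "0 \<le> a" "a < b" "b \<le> 1"
  shows "(SW lam mu R C a + SW lam mu R C b) / 2 < SW lam mu R C ((a + b) / 2)"
proof -
  define u where "u = mu - a * lam"
  define v where "v = mu - b * lam"
  have du: "mu - lam \<le> u" using den_bound[of lam lam mu a] assms u_def by auto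
  have dv: "mu - lam \<le> v" using den_bound[of lam lam mu b] assms v_def by auto
  have "a * lam < b * lam" using assms by simp
  then have uv: "u \<noteq> v" unfolding u_def v_def by linarith
  have u0: "0 < u" "0 < v" using du dv assms by auto
  have mid: "mu - (a + b) / 2 * lam = (u + v) / 2" unfolding u_def v_def by (simp add: field_simps)
  have mu0: "0 < mu" using assms by simp
  have key: "2 / (u + v) < (1/u + 1/v) / 2" using avg_ineq[OF u0 uv] .
  have "C * mu * (2 / (u + v)) < C * mu * ((1/u + 1/v) / 2)"
    using key mu0 assms by (intro mult_strict_left_mono) auto
  moreover have "SW lam mu R C ((a + b) / 2) = (a+b)/2 * lam * R - C * mu * (2 / (u + v)) + C"
  proof -
    have "mu - (a + b) / 2 * lam \<noteq> 0" using mid u0 by simp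
    then have "SW lam mu R C ((a + b) / 2) = (a+b)/2 * lam * R - C * mu * (1 / (mu - (a + b) / 2 * lam)) + C"
      by (rule SW_alt)
    also have "1 / (mu - (a + b) / 2 * lam) = 2 / (u + v)" unfolding mid by simp
    finally show ?thesis .
  qed
  moreover have "SW lam mu R C a = a * lam * R - C * mu * (1 / u) + C"
    using SW_alt[of mu a lam R C] u0 u_def by simp
  moreover have "SW lam mu R C b = b * lam * R - C * mu * (1 / v) + C"
    using SW_alt[of mu b lam R C] u0 v_def by simp
  ultimately show ?thesis by (simp add: field_simps)
qed

theorem proposition2:
  fixes D :: "real measure" and lam mu R C lmin lmax :: real
  assumes D_prob: "prob_space D"
    and D_sets: "sets D = sets borel"
    and lam_pos: "lam > 0"
    and C_pos: "C > 0"
    and R_ge: "R \<ge> C / mu"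
    and bounds: "0 \<le> lmin" "lmin < lam" "lam < lmax" "lmax < mu"
    and supp_lower: "AE x in D. lmin \<le> x"
    and supp_upper: "AE x in D. x \<le> lmax"
    and lmin_in_supp: "\<forall>e>0. measure D {lmin - e <..< lmin + e} > 0"
    and lmax_in_supp: "\<forall>e>0. measure D {lmax - e <..< lmax + e} > 0"
    and nondegenerate: "\<not> (\<exists>c. AE x in D. x = c)"
  shows "(R - C * EW D mu (q_s lam mu R C) \<ge> 0 \<longrightarrow> q_s lam mu R C \<le> q_e D mu R C)
       \<and> (R - C * EW D mu (q_s lam mu R C) = 0 \<longrightarrow> q_s lam mu R C = q_e D mu R C)"
proof -
  interpret P: prob_space D by (rule D_prob)
  have AEb: "AE x in D. 0 \<le> x \<and> x \<le> lmax" using supp_lower supp_upper bounds by auto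
  have meas: "(\<lambda>x. W mu (q*x)) \<in> borel_measurable D" for q
    unfolding W_def by (subst measurable_cong_sets[OF D_sets refl]) measurable
  have integ: "integrable D (\<lambda>x. W mu (q*x))" if q: "0 \<le> q" "q \<le> 1" for q
  proof (rule P.integrable_const_bound[where B="1/(mu-lmax)"])
    show "AE x in D. norm (W mu (q*x)) \<le> 1/(mu-lmax)"
      using AEb
    proof eventually_elim
      case (elim x)
      then have "mu - lmax \<le> mu - q * x" "0 < mu - q * x" using den_bound[of x lmax mu q] q bounds by auto
      then show ?case unfolding W_def using bounds by (simp add: frac_le)
    qed
  qed (rule meas)
  have diffeq: "EW D mu b - EW D mu a = (\<integral>x. W mu (b*x) - W mu (a*x) \<partial>D)"
    if "0 \<le> a" "a \<le> b" "b \<le> 1" for a b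
    unfolding EW_def using integ that by (subst Bochner_Integration.integral_diff) auto
  have mono: "EW D mu a < EW D mu b" if ab: "0 \<le> a" "a < b" "b \<le> 1" for a b
  proof -
    have ii: "integrable D (\<lambda>x. W mu (b*x) - W mu (a*x))" using integ ab by auto
    have nn: "AE x in D. 0 \<le> W mu (b*x) - W mu (a*x)"
      using AEb by eventually_elim (use W_diff(2)[of _ lmax mu a b] ab bounds in auto)
    have "(\<integral>x. W mu (b*x) - W mu (a*x) \<partial>D) \<noteq> 0"
    proof
      assume "(\<integral>x. W mu (b*x) - W mu (a*x) \<partial>D) = 0"
      then have "AE x in D. W mu (b*x) - W mu (a*x) = 0"
        using integral_nonneg_eq_0_iff_AE[OF ii nn] by simp
      then have "AE x in D. x = 0"
        using AEb
      proof eventually_elim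
        case (elim x)
        show ?case
        proof (rule ccontr)
          assume "x \<noteq> 0"
          then have "0 < x" using elim by auto
          then have "W mu (a*x) < W mu (b*x)" using W_strict[of x lmax mu a b] elim ab bounds by auto
          then show False using elim by simp
        qed
      qed
      then show False using nondegenerate by blast
    qed
    moreover have "0 \<le> (\<integral>x. W mu (b*x) - W mu (a*x) \<partial>D)"
      by (rule integral_nonneg_AE[OF nn])
    ultimately show ?thesis using diffeq[of a b] ab by simp
  qed
  define K where "K = lmax / (mu - lmax)^2"
  have K0: "0 \<le> K" unfolding K_def using bounds by simp
  have lip: "EW D mu b - EW D mu a \<le> (b - a) * K" if ab: "0 \<le> a" "a \<le> b" "b \<le> 1" for a b
  proof -
    have "(\<integral>x. W mu (b*x) - W mu (a*x) \<partial>D) \<le> (\<integral>x. (b - a) * K \<partial>D)"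
    proof (rule integral_mono_AE)
      show "integrable D (\<lambda>x. W mu (b*x) - W mu (a*x))" using integ ab by auto
      show "AE x in D. W mu (b*x) - W mu (a*x) \<le> (b - a) * K"
        using AEb by eventually_elim (use W_diff(3)[of _ lmax mu a b] ab bounds in \<open>auto simp: K_def\<close>)
    qed simp
    then show ?thesis using diffeq[OF ab] by (simp add: P.prob_space)
  qed
  have cont: "continuous_on {0..1} (\<lambda>q. C * EW D mu q)"
  proof (rule lipschitz_on_continuous_on[where L="C*K"], rule lipschitz_onI)
    fix x y :: real assume xy: "x \<in> {0..1}" "y \<in> {0..1}"
    have "\<bar>EW D mu x - EW D mu y\<bar> \<le> K * \<bar>x - y\<bar>"
    proof (cases "x \<le> y")
      case True
      have "EW D mu x \<le> EW D mu y" using mono[of x y] xy True by (cases "x = y") auto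
      moreover have "EW D mu y - EW D mu x \<le> (y - x) * K" using lip[of x y] xy True by auto
      ultimately show ?thesis using True by (simp add: abs_of_nonneg abs_of_nonpos mult.commute)
    next
      case False
      have "EW D mu y \<le> EW D mu x" using mono[of y x] xy False by auto
      moreover have "EW D mu x - EW D mu y \<le> (x - y) * K" using lip[of y x] xy False by auto
      ultimately show ?thesis using False by (simp add: abs_of_nonneg abs_of_nonpos mult.commute)
    qed
    then have "C * \<bar>EW D mu x - EW D mu y\<bar> \<le> C * (K * \<bar>x - y\<bar>)"
      using C_pos by (intro mult_left_mono) auto
    then show "dist (C * EW D mu x) (C * EW D mu y) \<le> C * K * dist x y"
    proof -
      have "dist (C * EW D mu x) (C * EW D mu y) = C * \<bar>EW D mu x - EW D mu y\<bar>"
        using C_pos unfolding dist_real_def right_diff_distrib[symmetric] by (simp add: abs_mult)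
      moreover have "C * K * dist x y = C * (K * \<bar>x - y\<bar>)" by (simp add: dist_real_def)
      ultimately show ?thesis using \<open>C * \<bar>EW D mu x - EW D mu y\<bar> \<le> C * (K * \<bar>x - y\<bar>)\<close> by linarith
    qed
  qed (use C_pos K0 in simp)
  have F0: "C * EW D mu 0 \<le> R"
    using R_ge by (simp add: EW_def W_def P.prob_space)
  have F1: "C * EW D mu 1 > R" if "\<not> R - C * EW D mu 1 \<ge> 0" using that by simp
  have Fmono: "C * EW D mu a < C * EW D mu b" if "0 \<le> a" "a < b" "b \<le> 1" for a b
    using mono[OF that] C_pos by simp
  have Fle: "a \<le> b" if "0 \<le> a" "a \<le> 1" "0 \<le> b" "b \<le> 1" "C * EW D mu a \<le> C * EW D mu b" for a b
    using Fmono[of b a] that by force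
  have contSW: "continuous_on {0..1} (SW lam mu R C)"
  proof -
    have "\<forall>q\<in>{0..1}. mu - q * lam \<noteq> 0"
      using den_bound[of lam lam mu] bounds lam_pos by force
    then show ?thesis unfolding SW_def W_def
      by (intro continuous_intros) auto
  qed
  obtain qm where qm: "qm \<in> {0..1}" "\<forall>q'\<in>{0..1}. SW lam mu R C q' \<le> SW lam mu R C qm"
    using continuous_attains_sup[OF compact_Icc _ contSW] by auto
  have uniq: "a = b" if "a \<in> {0..1}" "\<forall>q'\<in>{0..1}. SW lam mu R C q' \<le> SW lam mu R C a"
     "b \<in> {0..1}" "\<forall>q'\<in>{0..1}. SW lam mu R C q' \<le> SW lam mu R C b" for a b
  proof (rule ccontr)
    assume "a \<noteq> b"
    then consider "a < b" | "b < a" by linarith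
    then show False
    proof cases
      case 1
      have "(a+b)/2 \<in> {0..1}" using that by auto
      then have "SW lam mu R C ((a+b)/2) \<le> SW lam mu R C a" "SW lam mu R C b \<le> SW lam mu R C a"
        "SW lam mu R C a \<le> SW lam mu R C b" using that by blast+
      moreover have "(SW lam mu R C a + SW lam mu R C b) / 2 < SW lam mu R C ((a + b) / 2)"
        using SW_strict[of lam mu C a b R] 1 that(1,3) bounds lam_pos C_pos by simp
      ultimately show False by argo
    next
      case 2
      have "(b+a)/2 \<in> {0..1}" using that by auto
      then have "SW lam mu R C ((b+a)/2) \<le> SW lam mu R C a" "SW lam mu R C b \<le> SW lam mu R C a"
        "SW lam mu R C a \<le> SW lam mu R C b" using that by blast+
      moreover have "(SW lam mu R C b + SW lam mu R C a) / 2 < SW lam mu R C ((b + a) / 2)"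
        using SW_strict[of lam mu C b a R] 2 that(1,3) bounds lam_pos C_pos by simp
      ultimately show False by argo
    qed
  qed
  have qs: "q_s lam mu R C \<in> {0..1}"
  proof -
    have "\<exists>!q. q \<in> {0..1} \<and> (\<forall>q'\<in>{0..1}. SW lam mu R C q' \<le> SW lam mu R C q)"
      using qm uniq by blast
    from theI'[OF this] show ?thesis unfolding q_s_def by blast
  qed
  define s where "s = q_s lam mu R C"
  have s01: "0 \<le> s" "s \<le> 1" using qs s_def by auto
  have qe_root: "q_e D mu R C \<in> {0..1} \<and> C * EW D mu (q_e D mu R C) = R
      \<and> (\<forall>q\<in>{0..1}. C * EW D mu q = R \<longrightarrow> q = q_e D mu R C)"
    if nc: "\<not> R - C * EW D mu 1 \<ge> 0"
  proof -
    obtain r where r: "0 \<le> r" "r \<le> 1" "C * EW D mu r = R"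
      using IVT'[of "\<lambda>q. C * EW D mu q" 0 R 1, OF F0 less_imp_le[OF F1[OF nc]] _ cont] by auto
    have ex: "\<exists>!q. q \<in> {0..1} \<and> C * EW D mu q = R"
    proof (rule ex1I[where a=r])
      show "r \<in> {0..1} \<and> C * EW D mu r = R" using r by auto
      fix q assume "q \<in> {0..1} \<and> C * EW D mu q = R"
      then show "q = r" using Fle[of q r] Fle[of r q] r by auto
    qed
    have qe: "q_e D mu R C = (THE q. q \<in> {0..1} \<and> C * EW D mu q = R)"
      unfolding q_e_def using nc by simp
    show ?thesis unfolding qe using theI'[OF ex] ex by blast
  qed
  show ?thesis
  proof (cases "R - C * EW D mu 1 \<ge> 0")
    case True
    then have qe1: "q_e D mu R C = 1" unfolding q_e_def by simp
    have "s = 1" if "R - C * EW D mu s = 0"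
    proof -
      have "C * EW D mu 1 \<le> C * EW D mu s" using that True by simp
      then show ?thesis using Fle[of 1 s] s01 by auto
    qed
    then show ?thesis using qe1 s01 unfolding s_def[symmetric] by auto
  next
    case False
    note e = qe_root[OF False]
    define t where "t = q_e D mu R C"
    have t: "0 \<le> t" "t \<le> 1" "C * EW D mu t = R" using e t_def by auto
    have "s \<le> t" if "R - C * EW D mu s \<ge> 0"
      using Fle[of s t] s01 t that by auto
    moreover have "s = t" if "R - C * EW D mu s = 0"
      using e s01 that t_def by auto
    ultimately show ?thesis unfolding s_def[symmetric] t_def[symmetric] by auto
  qed
qed

end
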